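(* Let $R=K[x_1,\ldots,x_n]$ be a polynomial ring over a field $K$ with its $\mathbb{N}^n$-grading, and let $M$ be a nonzero squarefree $R$-module. If $M_0=0$ (the component of degree $0\in\mathbb{N}^n$), then $\operatorname{depth} M>0$.
   Context: An $\mathbb{N}^n$-graded $R$-module $M$ (with $\deg x_j=e_j$, the $j$-th unit vector) is squarefree if, for all $\alpha=(\alpha_1,\ldots,\alpha_n)\in\mathbb{N}^n$ and all $j$, multiplication by $x_j$ from $M_\alpha$ to $M_{\alpha+e_j}$ is bijective whenever $\alpha_j\neq 0$. Depth is taken with respect to $\mathfrak{m}=(x_1,\ldots,x_n)$. *)

theory Defs
  imports Complex_Main
begin

(* Multidegrees alpha in N^n are functions nat => nat vanishing outside {0..<n};
   the j-th unit vector e_j (0-based, j < n). *)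
definition unitv :: "nat \<Rightarrow> nat \<Rightarrow> nat" where
  "unitv j = (\<lambda>i. if i = j then 1 else 0)"

definition in_Nn :: "nat \<Rightarrow> (nat \<Rightarrow> nat) \<Rightarrow> bool" where
  "in_Nn n \<alpha> \<longleftrightarrow> (\<forall>i\<ge>n. \<alpha> i = 0)"

(* An N^n-graded module over R = K[x_1,...,x_n]:
   - the underlying group 'm is a K-vector space via smul;
   - X j is the action of the variable x_(j+1) (0-based index j < n); these are
     K-linear and pairwise commuting, which is exactly an R-module structure;
   - Mc alpha is the graded component M_alpha (a K-subspace), zero for alpha not in N^n;
   - x_j maps M_alpha into M_(alpha + e_j);
   - M is the internal direct sum of the M_alpha. *)
definition graded_module ::
  "nat \<Rightarrow> ('k::field \<Rightarrow> 'm::ab_group_add \<Rightarrow> 'm) \<Rightarrow> (nat \<Rightarrow> 'm \<Rightarrow> 'm)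
     \<Rightarrow> ((nat \<Rightarrow> nat) \<Rightarrow> 'm set) \<Rightarrow> bool" where
  "graded_module n smul X Mc \<longleftrightarrow>
     vector_space smul
   \<and> (\<forall>j<n. Vector_Spaces.linear smul smul (X j))
   \<and> (\<forall>i<n. \<forall>j<n. \<forall>u. X i (X j u) = X j (X i u))
   \<and> (\<forall>\<alpha>. module.subspace smul (Mc \<alpha>))
   \<and> (\<forall>\<alpha>. \<not> in_Nn n \<alpha> \<longrightarrow> Mc \<alpha> = {0})
   \<and> (\<forall>\<alpha> j u. j < n \<longrightarrow> u \<in> Mc \<alpha> \<longrightarrow> X j u \<in> Mc (\<lambda>i. \<alpha> i + unitv j i))
   \<and> (\<forall>u. \<exists>!c. finite {\<alpha>. c \<alpha> \<noteq> 0} \<and> (\<forall>\<alpha>. c \<alpha> \<in> Mc \<alpha>)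
              \<and> u = sum c {\<alpha>. c \<alpha> \<noteq> 0})"

definition squarefree_module ::
  "nat \<Rightarrow> (nat \<Rightarrow> 'm::ab_group_add \<Rightarrow> 'm) \<Rightarrow> ((nat \<Rightarrow> nat) \<Rightarrow> 'm set) \<Rightarrow> bool" where
  "squarefree_module n X Mc \<longleftrightarrow>
     (\<forall>\<alpha> j. in_Nn n \<alpha> \<longrightarrow> j < n \<longrightarrow> \<alpha> j \<noteq> 0 \<longrightarrow>
        bij_betw (X j) (Mc \<alpha>) (Mc (\<lambda>i. \<alpha> i + unitv j i)))"

(* depth M > 0 w.r.t. m = (x_1,...,x_n), in the Ext-characterisation
   depth M = min{i. Ext^i_R(K,M) \<noteq> 0}: depth M > 0 iff Hom_R(R/m, M) = 0,
   i.e. no nonzero element of M is annihilated by all variables. *)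
definition depth_pos :: "nat \<Rightarrow> (nat \<Rightarrow> 'm::ab_group_add \<Rightarrow> 'm) \<Rightarrow> bool" where
  "depth_pos n X \<longleftrightarrow> (\<forall>u. (\<forall>j<n. X j u = 0) \<longrightarrow> u = 0)"

end

theory Submission
  imports Defs
begin

theorem lemma3p1:
  fixes n :: nat
    and smul :: "'k::field \<Rightarrow> 'm::ab_group_add \<Rightarrow> 'm"
    and X :: "nat \<Rightarrow> 'm \<Rightarrow> 'm"
    and Mc :: "(nat \<Rightarrow> nat) \<Rightarrow> 'm set"
  assumes "graded_module n smul X Mc"
    and "squarefree_module n X Mc"
    and "\<exists>u::'m. u \<noteq> 0"
    and "Mc (\<lambda>_. 0) = {0}"
  shows "depth_pos n X"
  unfolding depth_pos_def
proof (intro allI impI)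
  fix u assume ann: "\<forall>j<n. X j u = 0"
  note G = assms(1)[unfolded graded_module_def]
  have vs: "vector_space smul" using G by blast
  have md: "module smul" using vs module_iff_vector_space by blast
  have lin: "\<And>j. j < n \<Longrightarrow> module_hom smul smul (X j)"
    using G vs by (simp add: module_hom_iff_linear)
  have sub0: "\<And>\<alpha>. 0 \<in> Mc \<alpha>" using G md module.subspace_0 by blast
  have outside: "\<And>\<alpha>. \<not> in_Nn n \<alpha> \<Longrightarrow> Mc \<alpha> = {0}" using G by blast
  have maps: "\<And>\<alpha> j v. j < n \<Longrightarrow> v \<in> Mc \<alpha> \<Longrightarrow> X j v \<in> Mc (\<lambda>i. \<alpha> i + unitv j i)"
    using G by blast
  have uniq0: "\<forall>w. \<exists>!c. finite {\<alpha>. c \<alpha> \<noteq> 0} \<and> (\<forall>\<alpha>. c \<alpha> \<in> Mc \<alpha>) \<and> w = sum c {\<alpha>. c \<alpha> \<noteq> 0}"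
    using G by (elim conjE) assumption
  note uniq = spec[OF uniq0]
  obtain c where cfin: "finite {\<alpha>. c \<alpha> \<noteq> 0}" and cin: "\<forall>\<alpha>. c \<alpha> \<in> Mc \<alpha>"
    and usum: "u = sum c {\<alpha>. c \<alpha> \<noteq> 0}" using uniq[of u] by blast
  define S where "S = {\<alpha>. c \<alpha> \<noteq> 0}"
  have zero_dec: "\<And>d. finite {\<alpha>. d \<alpha> \<noteq> 0} \<Longrightarrow> (\<forall>\<alpha>. d \<alpha> \<in> Mc \<alpha>) \<Longrightarrow> 0 = sum d {\<alpha>. d \<alpha> \<noteq> 0} \<Longrightarrow> d = (\<lambda>_. 0)"
  proof -
    fix d :: "(nat \<Rightarrow> nat) \<Rightarrow> 'm"
    assume "finite {\<alpha>. d \<alpha> \<noteq> 0}" "\<forall>\<alpha>. d \<alpha> \<in> Mc \<alpha>" "0 = sum d {\<alpha>. d \<alpha> \<noteq> 0}"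
    moreover have "finite {\<alpha>. (\<lambda>_. 0::'m) \<alpha> \<noteq> 0} \<and> (\<forall>\<alpha>. (\<lambda>_. 0::'m) \<alpha> \<in> Mc \<alpha>) \<and> (0::'m) = sum (\<lambda>_. 0) {\<alpha>. (\<lambda>_. 0::'m) \<alpha> \<noteq> 0}"
      using sub0 by simp
    ultimately show "d = (\<lambda>_. 0)" using uniq[of 0] by (elim alt_ex1E) (erule allE[of _ d], erule allE[of _ "\<lambda>_. 0"], erule mp, (assumption | rule conjI)+)
  qed
  have Xc0: "X j (c \<alpha>) = 0" if j: "j < n" for j \<alpha>
  proof -
    define sh where "sh = (\<lambda>(\<beta>::nat\<Rightarrow>nat) i. \<beta> i + unitv j i)"
    have shinj: "inj sh"
    proof (rule injI)
      fix a b assume "sh a = sh b"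
      hence "\<And>i. a i + unitv j i = b i + unitv j i" unfolding sh_def by metis
      thus "a = b" by auto
    qed
    define d where "d = (\<lambda>\<beta>. if \<beta> \<in> range sh then X j (c (inv sh \<beta>)) else 0)"
    have dsh: "d (sh \<beta>) = X j (c \<beta>)" for \<beta>
      unfolding d_def using shinj by simp
    have X0: "X j 0 = 0" using lin[OF j] module_hom.zero by blast
    have dsupp: "{\<beta>. d \<beta> \<noteq> 0} \<subseteq> sh ` S"
    proof
      fix \<beta> assume "\<beta> \<in> {\<beta>. d \<beta> \<noteq> 0}"
      hence ne: "d \<beta> \<noteq> 0" by simp
      then obtain a where a: "\<beta> = sh a" unfolding d_def by (auto split: if_splits)
      with ne dsh have "c a \<noteq> 0" using X0 by auto
      thus "\<beta> \<in> sh ` S" using a S_def by auto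
    qed
    have Sfin: "finite S" using cfin S_def by simp
    have dfin: "finite {\<beta>. d \<beta> \<noteq> 0}" using dsupp Sfin finite_subset by blast
    have din: "\<forall>\<beta>. d \<beta> \<in> Mc \<beta>"
    proof
      fix \<beta> show "d \<beta> \<in> Mc \<beta>"
      proof (cases "\<beta> \<in> range sh")
        case True
        then obtain a where a: "\<beta> = sh a" by auto
        show ?thesis using a dsh maps[OF j cin[rule_format, of a]] sh_def by simp
      next
        case False thus ?thesis using sub0 d_def by simp
      qed
    qed
    have "sum d {\<beta>. d \<beta> \<noteq> 0} = sum d (sh ` S)"
      using dsupp Sfin by (intro sum.mono_neutral_left) auto
    also have "\<dots> = sum (d \<circ> sh) S" using shinj by (simp add: sum.reindex inj_on_def inj_def)
    also have "\<dots> = sum (\<lambda>a. X j (c a)) S" using dsh by simp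
    also have "\<dots> = X j (sum c S)" using module_hom.sum[OF lin[OF j]] by metis
    also have "\<dots> = 0" using ann j usum S_def by simp
    finally have "d = (\<lambda>_. 0)" using zero_dec dfin din by metis
    hence "d (sh \<alpha>) = 0" by simp
    thus ?thesis using dsh by simp
  qed
  have "c \<alpha> = 0" for \<alpha>
  proof (rule ccontr)
    assume ne: "c \<alpha> \<noteq> 0"
    have inN: "in_Nn n \<alpha>" using outside cin ne by blast
    have "\<alpha> \<noteq> (\<lambda>_. 0)" using assms(4) cin ne by auto
    then obtain j where aj: "\<alpha> j \<noteq> 0" by auto
    have jn: "j < n" using inN aj unfolding in_Nn_def by (meson not_le)
    have bij: "bij_betw (X j) (Mc \<alpha>) (Mc (\<lambda>i. \<alpha> i + unitv j i))"
      using assms(2) inN jn aj unfolding squarefree_module_def by blast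
    have "X j (c \<alpha>) = X j 0" using Xc0[OF jn] module_hom.zero[OF lin[OF jn]] by simp
    hence "c \<alpha> = 0" using bij cin sub0 unfolding bij_betw_def inj_on_def by blast
    thus False using ne by simp
  qed
  thus "u = 0" using usum by simp
qed

end
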